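(* Let $p\ge2$. The tightness potential $TP$ is strongly differentiable at every $\mu\in P_p(\mathbb{R}^d)$, with gradient plan (strong Fréchet subdifferential) $(\iota,4T_\mu)_\#\mu$.
   Context: $P_p(\mathbb{R}^d)$ is the set of Borel probability measures on $\mathbb{R}^d$ with finite $p$-th moment; $M_2^2(\mu)=\int\|x\|^2d\mu$; $S_\mu=\int yy^\top d\mu(y)$. The tightness potential is $TP(\mu)=\iint\big[\langle x,y\rangle^2-\tfrac1d\|x\|^2\|y\|^2\big]\,d\mu(x)\,d\mu(y)$ and the tightness operator is $T_\mu x=S_\mu x-\frac{M_2^2(\mu)}{d}x$. $\iota$ is the identity map and $(\iota,g)_\#\mu$ the pushforward of $\mu$ under $x\mapsto(x,g(x))$. Let $q=p/(p-1)$. For $\gamma\in P(\mathbb{R}^d\times\mathbb{R}^d)$ and $\nu\in P_p(\mathbb{R}^d)$, $\Gamma(\gamma,\nu)$ denotes the set of probability measures $\beta$ on $(\mathbb{R}^d)^3$ with $(\pi^1,\pi^2)_\#\beta=\gamma$ and $\pi^3_\#\beta=\nu$, and for $\mu=\pi^1_\#\gamma$, $C_{p,\beta}(\mu,\nu)=\big(\iiint\|x_1-x_3\|^p\,d\beta\big)^{1/p}$. A functional $F:P_p(\mathbb{R}^d)\to\mathbb{R}$ is strongly differentiable at $\mu$ with gradient plan $\gamma$ (where $\pi^1_\#\gamma=\mu$ and $\iint\|x_2\|^q d\gamma<\infty$) if for every $\nu\in P_p(\mathbb{R}^d)$ and every $\beta\in\Gamma(\gamma,\nu)$, $F(\nu)-F(\mu)=\iiint\langle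 x_2,x_3-x_1\rangle\,d\beta(x_1,x_2,x_3)+R_\beta$, where $|R_\beta|\le\omega(C_{p,\beta}(\mu,\nu))$ for a function $\omega$ depending only on $\mu$ with $\omega(r)/r\to0$ as $r\to0$. *)

theory Defs
  imports "HOL-Probability.Probability"
begin

definition Prob :: "'a::topological_space measure set" where
  "Prob = {\<mu>. prob_space \<mu> \<and> sets \<mu> = sets borel}"

definition Pp :: "real \<Rightarrow> 'a::euclidean_space measure set" where
  "Pp p = {\<mu>. \<mu> \<in> Prob \<and> integrable \<mu> (\<lambda>x. norm x powr p)}"

definition M2sq :: "'a::euclidean_space measure \<Rightarrow> real" where
  "M2sq \<mu> = (\<integral>x. (norm x)\<^sup>2 \<partial>\<mu>)"

definition Smat :: "'a::euclidean_space measure \<Rightarrow> 'a \<Rightarrow> 'a" where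
  "Smat \<mu> x = (\<integral>y. (y \<bullet> x) *\<^sub>R y \<partial>\<mu>)"

definition Top :: "'a::euclidean_space measure \<Rightarrow> 'a \<Rightarrow> 'a" where
  "Top \<mu> x = Smat \<mu> x - (M2sq \<mu> / real DIM('a)) *\<^sub>R x"

definition TP :: "'a::euclidean_space measure \<Rightarrow> real" where
  "TP \<mu> = (\<integral>x. (\<integral>y. (x \<bullet> y)\<^sup>2 - (norm x)\<^sup>2 * (norm y)\<^sup>2 / real DIM('a) \<partial>\<mu>) \<partial>\<mu>)"

definition Gam :: "('a::euclidean_space \<times> 'a) measure \<Rightarrow> 'a measure \<Rightarrow> ('a \<times> 'a \<times> 'a) measure set" where
  "Gam \<gamma> \<nu> = {\<beta>. \<beta> \<in> Prob \<and>
      distr \<beta> borel (\<lambda>(x1, x2, x3). (x1, x2)) = \<gamma> \<and>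
      distr \<beta> borel (\<lambda>(x1, x2, x3). x3) = \<nu>}"

definition Cpb :: "real \<Rightarrow> ('a::euclidean_space \<times> 'a \<times> 'a) measure \<Rightarrow> real" where
  "Cpb p \<beta> = (\<integral>(x1, x2, x3). norm (x1 - x3) powr p \<partial>\<beta>) powr (1 / p)"

definition strongly_differentiable ::
  "real \<Rightarrow> ('a::euclidean_space measure \<Rightarrow> real) \<Rightarrow> 'a measure \<Rightarrow> ('a \<times> 'a) measure \<Rightarrow> bool" where
  "strongly_differentiable p F \<mu> \<gamma> \<longleftrightarrow>
     \<gamma> \<in> Prob \<and> distr \<gamma> borel fst = \<mu> \<and>
     integrable \<gamma> (\<lambda>(x1, x2). norm x2 powr (p / (p - 1))) \<and>
     (\<exists>\<omega> :: real \<Rightarrow> real. ((\<lambda>r. \<omega> r / r) \<longlongrightarrow> 0) (at_right 0) \<and>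
        (\<forall>\<nu> \<in> Pp p. \<forall>\<beta> \<in> Gam \<gamma> \<nu>.
           \<bar>F \<nu> - F \<mu> - (\<integral>(x1, x2, x3). x2 \<bullet> (x3 - x1) \<partial>\<beta>)\<bar> \<le> \<omega> (Cpb p \<beta>)))"

end

theory Submission
  imports Defs
begin

lemma sq_le_powr:
  fixes t p :: real assumes "p \<ge> 2" "t \<ge> 0"
  shows "t\<^sup>2 \<le> 1 + t powr p"
proof (cases "t \<le> 1")
  case True
  then have "t\<^sup>2 \<le> 1" using assms by (simp add: power_le_one)
  then show ?thesis using powr_ge_zero[of t p] by linarith
next
  case False
  then have "t powr 2 \<le> t powr p" using assms by (intro powr_mono) auto
  then show ?thesis using False by (simp add: powr_numeral)
qed

lemma meas_borel:
  assumes "sets M = sets (borel :: 'b::topological_space measure)" "continuous_on UNIV f"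
  shows "f \<in> borel_measurable M"
  by (subst measurable_cong_sets[OF assms(1) refl]) (rule borel_measurable_continuous_onI[OF assms(2)])

lemma mom2:
  fixes m :: "'a::euclidean_space measure"
  assumes "p \<ge> 2" "m \<in> Pp p"
  shows "integrable m (\<lambda>x. (norm x)\<^sup>2)"
proof -
  have pm: "prob_space m" and sm: "sets m = sets borel" and ip: "integrable m (\<lambda>x. norm x powr p)"
    using assms(2) by (auto simp: Pp_def Prob_def)
  interpret prob_space m by fact
  have "integrable m (\<lambda>x. 1 + norm x powr p)" using ip by simp
  then show ?thesis
    apply (rule Bochner_Integration.integrable_bound)
     apply (rule meas_borel[OF sm], intro continuous_intros)
    using sq_le_powr[OF assms(1)] by (simp add: abs_of_nonneg)
qed

lemma prod_int:
  fixes f g :: "'b \<Rightarrow> 'a::euclidean_space"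
  assumes "f \<in> borel_measurable M" "g \<in> borel_measurable M"
    "integrable M (\<lambda>x. (norm (f x))\<^sup>2)" "integrable M (\<lambda>x. (norm (g x))\<^sup>2)"
  shows "integrable M (\<lambda>x. (f x \<bullet> u) * (g x \<bullet> v))"
proof -
  have "integrable M (\<lambda>x. (norm u * norm v) * ((norm (f x))\<^sup>2 + (norm (g x))\<^sup>2))"
    using assms by (intro integrable_mult_right Bochner_Integration.integrable_add)
  then show ?thesis
  proof (rule Bochner_Integration.integrable_bound)
    show "(\<lambda>x. (f x \<bullet> u) * (g x \<bullet> v)) \<in> borel_measurable M" using assms by measurable
    show "AE x in M. norm ((f x \<bullet> u) * (g x \<bullet> v)) \<le> norm ((norm u * norm v) * ((norm (f x))\<^sup>2 + (norm (g x))\<^sup>2))"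
    proof (rule AE_I2)
      fix x
      have a: "\<bar>f x \<bullet> u\<bar> \<le> norm (f x) * norm u" by (rule Cauchy_Schwarz_ineq2)
      have b: "\<bar>g x \<bullet> v\<bar> \<le> norm (g x) * norm v" by (rule Cauchy_Schwarz_ineq2)
      have c: "2 * (norm (f x) * norm (g x)) \<le> (norm (f x))\<^sup>2 + (norm (g x))\<^sup>2"
      proof -
        have "0 \<le> (norm (f x) - norm (g x))\<^sup>2" by simp
        then show ?thesis unfolding power2_diff by linarith
      qed
      have "\<bar>(f x \<bullet> u) * (g x \<bullet> v)\<bar> \<le> (norm (f x) * norm u) * (norm (g x) * norm v)"
        unfolding abs_mult by (intro mult_mono a b) auto
      also have "\<dots> = (norm u * norm v) * (norm (f x) * norm (g x))" by simp
      also have "\<dots> \<le> (norm u * norm v) * ((norm (f x))\<^sup>2 + (norm (g x))\<^sup>2)"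
      proof -
        have "0 \<le> norm (f x) * norm (g x)" by simp
        then have "norm (f x) * norm (g x) \<le> (norm (f x))\<^sup>2 + (norm (g x))\<^sup>2" using c by linarith
        then show ?thesis by (intro mult_left_mono) auto
      qed
      finally show "norm ((f x \<bullet> u) * (g x \<bullet> v)) \<le> norm ((norm u * norm v) * ((norm (f x))\<^sup>2 + (norm (g x))\<^sup>2))"
        by simp
    qed
  qed
qed

lemma CS_int:
  fixes u v :: "'b \<Rightarrow> real"
  assumes "integrable M (\<lambda>x. (u x)\<^sup>2)" "integrable M (\<lambda>x. (v x)\<^sup>2)" "integrable M (\<lambda>x. u x * v x)"
  shows "(\<integral>x. u x * v x \<partial>M)\<^sup>2 \<le> (\<integral>x. (u x)\<^sup>2 \<partial>M) * (\<integral>x. (v x)\<^sup>2 \<partial>M)"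
proof -
  define A where "A = (\<integral>x. (u x)\<^sup>2 \<partial>M)"
  define B where "B = (\<integral>x. u x * v x \<partial>M)"
  define C where "C = (\<integral>x. (v x)\<^sup>2 \<partial>M)"
  have key: "0 \<le> t\<^sup>2 * A - 2 * t * B + C" for t
  proof -
    have "0 \<le> (\<integral>x. (t * u x - v x)\<^sup>2 \<partial>M)" by simp
    also have "(\<lambda>x. (t * u x - v x)\<^sup>2) = (\<lambda>x. t\<^sup>2 * (u x)\<^sup>2 - (2 * t) * (u x * v x) + (v x)\<^sup>2)"
      by (auto simp: power2_eq_square algebra_simps)
    also have "(\<integral>x. t\<^sup>2 * (u x)\<^sup>2 - (2 * t) * (u x * v x) + (v x)\<^sup>2 \<partial>M) = t\<^sup>2 * A - 2 * t * B + C"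
      using assms unfolding A_def B_def C_def by simp
    finally show ?thesis .
  qed
  have A0: "A \<ge> 0" unfolding A_def by simp
  show ?thesis
  proof (cases "A = 0")
    case True
    have "B = 0"
    proof (rule ccontr)
      assume "B \<noteq> 0"
      have e: "- 2 * ((C + 1) / (2 * B)) * B = - (C + 1)" using \<open>B \<noteq> 0\<close> by (simp add: field_simps)
      have "0 \<le> ((C+1)/(2*B))\<^sup>2 * A - 2 * ((C + 1) / (2 * B)) * B + C" by (rule key)
      then have "0 \<le> - (C + 1) + C" using True e \<open>B \<noteq> 0\<close> by simp
      then show False by simp
    qed
    then show ?thesis using True unfolding A_def B_def C_def by simp
  next
    case False
    then have "A > 0" using A0 by simp
    have "0 \<le> (B/A)\<^sup>2 * A - 2 * (B/A) * B + C" by (rule key)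
    then have "0 \<le> (C * A - B\<^sup>2) / A" using \<open>A > 0\<close> by (simp add: field_simps power2_eq_square)
    then have "B\<^sup>2 \<le> A * C" using \<open>A > 0\<close> by (simp add: zero_le_divide_iff algebra_simps)
    then show ?thesis unfolding A_def B_def C_def by simp
  qed
qed

lemma lyapunov:
  fixes X :: "'b \<Rightarrow> real"
  assumes "prob_space M" "\<And>x. x \<in> space M \<Longrightarrow> X x \<ge> 0" "integrable M X"
    "integrable M (\<lambda>x. X x powr s)" "s \<ge> 1"
  shows "(\<integral>x. X x \<partial>M) \<le> (\<integral>x. X x powr s \<partial>M) powr (1/s)"
proof -
  interpret prob_space M by fact
  define I where "I = (\<integral>x. X x powr s \<partial>M)"
  have I0: "I \<ge> 0" unfolding I_def by simp
  show ?thesis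
  proof (cases "I = 0")
    case True
    have "AE x in M. X x powr s = 0"
      using True assms(4) unfolding I_def by (subst integral_nonneg_eq_0_iff_AE[symmetric]) auto
    then have "AE x in M. X x = 0" by (auto simp: powr_eq_0_iff)
    then have "(\<integral>x. X x \<partial>M) = 0" by (simp add: integral_eq_zero_AE)
    then show ?thesis by simp
  next
    case False
    then have Ipos: "I > 0" using I0 by simp
    show ?thesis
    proof (cases "s = 1")
      case True
      have "(\<integral>x. X x powr s \<partial>M) = (\<integral>x. X x \<partial>M)"
        using assms(2) True by (intro Bochner_Integration.integral_cong) (auto simp: powr_one)
      then show ?thesis using True I0 unfolding I_def by simp
    next
      case False
      then have s1: "s > 1" using assms(5) by simp
      define s' where "s' = s / (s - 1)"
      have s'1: "s' > 1" unfolding s'_def using s1 by (simp add: field_simps)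
      have ss': "1/s + 1/s' = 1" unfolding s'_def using s1 by (simp add: field_simps)
      define R where "R = I powr (1/s)"
      have Rpos: "R > 0" unfolding R_def using Ipos by simp
      have Rs: "R powr s = I" unfolding R_def using Ipos s1 by (simp add: powr_powr)
      have pw: "X x / R \<le> X x powr s / (I * s) + 1 / s'" if "x \<in> space M" for x
      proof -
        have "(X x / R) * 1 \<le> (X x / R) powr s / s + 1 powr s' / s'"
          using Youngs_inequality[OF s1 s'1 ss', of "X x / R" 1] assms(2)[OF that] Rpos by simp
        also have "(X x / R) powr s = X x powr s / I"
          using assms(2)[OF that] Rpos by (simp add: powr_divide Rs)
        finally show ?thesis by simp
      qed
      have "(\<integral>x. X x / R \<partial>M) \<le> (\<integral>x. X x powr s / (I * s) + 1 / s' \<partial>M)"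
        using pw assms(3,4) by (intro integral_mono) auto
      also have "\<dots> = I / (I * s) + 1 / s'" using assms(4) unfolding I_def by (simp add: prob_space)
      also have "\<dots> = 1" using ss' Ipos by simp
      finally have "(\<integral>x. X x \<partial>M) / R \<le> 1" by simp
      then show ?thesis using Rpos unfolding R_def I_def by (simp add: field_simps)
    qed
  qed
qed

definition Sm :: "'a::euclidean_space measure \<Rightarrow> 'a \<Rightarrow> 'a \<Rightarrow> real" where
  "Sm m i j = (\<integral>x. (x \<bullet> i) * (x \<bullet> j) \<partial>m)"

lemma Sm_sym: "Sm m i j = Sm m j i"
  unfolding Sm_def by (simp add: mult.commute)

lemma Sm_int:
  fixes m :: "'a::euclidean_space measure"
  assumes "sets m = sets borel" "integrable m (\<lambda>x. (norm x)\<^sup>2)"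
  shows "integrable m (\<lambda>x. (x \<bullet> i) * (x \<bullet> j))"
  using prod_int[of "\<lambda>x. x" m "\<lambda>x. x"] assms meas_borel[OF assms(1), of "\<lambda>x. x"] by simp

lemma inner_sq_sum:
  fixes x y :: "'a::euclidean_space"
  shows "(x \<bullet> y)\<^sup>2 = (\<Sum>i\<in>Basis. \<Sum>j\<in>Basis. ((x \<bullet> i) * (x \<bullet> j)) * ((y \<bullet> i) * (y \<bullet> j)))"
  unfolding euclidean_inner[of x y] power2_eq_square sum_product
  by (intro sum.cong refl) (simp add: algebra_simps)

lemma norm_sq_sum:
  fixes y :: "'a::euclidean_space"
  shows "(norm y)\<^sup>2 = (\<Sum>k\<in>Basis. (y \<bullet> k) * (y \<bullet> k))"
  by (simp add: power2_norm_eq_inner euclidean_inner[of y y])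

lemma TP_formula:
  fixes m :: "'a::euclidean_space measure"
  assumes sm: "sets m = sets borel" and im: "integrable m (\<lambda>x. (norm x)\<^sup>2)"
  shows "TP m = (\<Sum>i\<in>Basis. \<Sum>j\<in>Basis. (Sm m i j)\<^sup>2) - (\<Sum>k\<in>Basis. Sm m k k)\<^sup>2 / real DIM('a)"
proof -
  note I = Sm_int[OF sm im]
  have inner: "(\<integral>y. (x \<bullet> y)\<^sup>2 - (norm x)\<^sup>2 * (norm y)\<^sup>2 / real DIM('a) \<partial>m)
     = (\<Sum>i\<in>Basis. \<Sum>j\<in>Basis. ((x \<bullet> i) * (x \<bullet> j)) * Sm m i j) - ((norm x)\<^sup>2 / real DIM('a)) * (\<Sum>k\<in>Basis. Sm m k k)"
    for x :: 'a
  proof -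
    have "(\<lambda>y. (x \<bullet> y)\<^sup>2 - (norm x)\<^sup>2 * (norm y)\<^sup>2 / real DIM('a)) =
      (\<lambda>y. (\<Sum>i\<in>Basis. \<Sum>j\<in>Basis. ((x \<bullet> i) * (x \<bullet> j)) * ((y \<bullet> i) * (y \<bullet> j))) - ((norm x)\<^sup>2 / real DIM('a)) * (\<Sum>k\<in>Basis. (y \<bullet> k) * (y \<bullet> k)))"
      apply (rule ext) subgoal for y by (simp add: inner_sq_sum norm_sq_sum[of y]) done
    then show ?thesis using I unfolding Sm_def
      by (simp add: integral_sum integrable_sum integral_mult_right_zero)
  qed
  have "TP m = (\<integral>x. (\<Sum>i\<in>Basis. \<Sum>j\<in>Basis. Sm m i j * ((x \<bullet> i) * (x \<bullet> j))) - (\<Sum>k\<in>Basis. Sm m k k) / real DIM('a) * (\<Sum>k\<in>Basis. (x \<bullet> k) * (x \<bullet> k)) \<partial>m)"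
    unfolding TP_def inner by (intro Bochner_Integration.integral_cong refl) (simp add: norm_sq_sum algebra_simps)
  also have "\<dots> = (\<Sum>i\<in>Basis. \<Sum>j\<in>Basis. Sm m i j * Sm m i j) - (\<Sum>k\<in>Basis. Sm m k k) / real DIM('a) * (\<Sum>k\<in>Basis. Sm m k k)"
    using I by (simp add: integral_sum integrable_sum Sm_def)
  finally show ?thesis by (simp add: power2_eq_square)
qed

lemma Smat_int:
  fixes m :: "'a::euclidean_space measure"
  assumes sm: "sets m = sets borel" and im: "integrable m (\<lambda>x. (norm x)\<^sup>2)"
  shows "integrable m (\<lambda>y. (y \<bullet> x) *\<^sub>R y)"
proof -
  have "integrable m (\<lambda>y. norm x * (norm y)\<^sup>2)" using im by simp
  then show ?thesis
  proof (rule Bochner_Integration.integrable_bound)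
    show "(\<lambda>y. (y \<bullet> x) *\<^sub>R y) \<in> borel_measurable m"
      by (rule meas_borel[OF sm]) (intro continuous_intros)
    show "AE y in m. norm ((y \<bullet> x) *\<^sub>R y) \<le> norm (norm x * (norm y)\<^sup>2)"
    proof (rule AE_I2)
      fix y :: 'a
      have "\<bar>y \<bullet> x\<bar> * norm y \<le> (norm y * norm x) * norm y"
        by (intro mult_right_mono Cauchy_Schwarz_ineq2) auto
      then show "norm ((y \<bullet> x) *\<^sub>R y) \<le> norm (norm x * (norm y)\<^sup>2)"
        by (simp add: power2_eq_square mult_ac)
    qed
  qed
qed

definition trS :: "'a::euclidean_space measure \<Rightarrow> real" where
  "trS m = (\<Sum>k\<in>Basis. Sm m k k)"

lemma M2sq_tr:
  fixes m :: "'a::euclidean_space measure"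
  assumes sm: "sets m = sets borel" and im: "integrable m (\<lambda>x. (norm x)\<^sup>2)"
  shows "M2sq m = trS m"
  unfolding M2sq_def trS_def Sm_def norm_sq_sum
  using Sm_int[OF sm im] by (simp add: integral_sum)

lemma Top_comp:
  fixes m :: "'a::euclidean_space measure"
  assumes sm: "sets m = sets borel" and im: "integrable m (\<lambda>x. (norm x)\<^sup>2)" and i: "i \<in> Basis"
  shows "Top m x \<bullet> i = (\<Sum>j\<in>Basis. Sm m i j * (x \<bullet> j)) - trS m / real DIM('a) * (x \<bullet> i)"
proof -
  have "Smat m x \<bullet> i = (\<integral>y. ((y \<bullet> x) *\<^sub>R y) \<bullet> i \<partial>m)"
    unfolding Smat_def using Smat_int[OF sm im] by (subst integral_inner_left) auto
  also have "\<dots> = (\<integral>y. (\<Sum>j\<in>Basis. (x \<bullet> j) * ((y \<bullet> i) * (y \<bullet> j))) \<partial>m)"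
    by (intro Bochner_Integration.integral_cong refl)
       (simp add: euclidean_inner[of _ x] sum_distrib_left mult_ac)
  also have "\<dots> = (\<Sum>j\<in>Basis. Sm m i j * (x \<bullet> j))"
    using Sm_int[OF sm im] by (simp add: integral_sum Sm_def mult.commute)
  finally show ?thesis unfolding Top_def using M2sq_tr[OF sm im] by (simp add: inner_diff_left)
qed

lemma Top_repr:
  fixes m :: "'a::euclidean_space measure"
  assumes sm: "sets m = sets borel" and im: "integrable m (\<lambda>x. (norm x)\<^sup>2)"
  shows "Top m x = (\<Sum>i\<in>Basis. ((\<Sum>j\<in>Basis. Sm m i j * (x \<bullet> j)) - trS m / real DIM('a) * (x \<bullet> i)) *\<^sub>R i)"
  by (subst euclidean_representation[symmetric, of "Top m x"]) (simp add: Top_comp[OF sm im])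

lemma Top_cont:
  fixes m :: "'a::euclidean_space measure"
  assumes sm: "sets m = sets borel" and im: "integrable m (\<lambda>x. (norm x)\<^sup>2)"
  shows "continuous_on UNIV (Top m)"
  unfolding Top_repr[OF sm im, abs_def] by (intro continuous_intros)

lemma Top_bound:
  fixes m :: "'a::euclidean_space measure"
  assumes sm: "sets m = sets borel" and im: "integrable m (\<lambda>x. (norm x)\<^sup>2)"
  shows "norm (Top m x) \<le> (\<Sum>i\<in>Basis. (\<Sum>j\<in>Basis. \<bar>Sm m i j\<bar>) + \<bar>trS m / real DIM('a)\<bar>) * norm x"
proof -
  have "norm (Top m x) \<le> (\<Sum>i\<in>Basis. \<bar>Top m x \<bullet> i\<bar>)" by (rule norm_le_l1)
  also have "\<dots> \<le> (\<Sum>i\<in>Basis. ((\<Sum>j\<in>Basis. \<bar>Sm m i j\<bar>) + \<bar>trS m / real DIM('a)\<bar>) * norm x)"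
  proof (rule sum_mono)
    fix i :: 'a assume i: "i \<in> Basis"
    have a: "\<bar>\<Sum>j\<in>Basis. Sm m i j * (x \<bullet> j)\<bar> \<le> (\<Sum>j\<in>Basis. \<bar>Sm m i j\<bar> * norm x)"
      by (rule order_trans[OF sum_abs sum_mono]) (auto simp: abs_mult intro!: mult_left_mono Basis_le_norm)
    have b: "\<bar>trS m / real DIM('a) * (x \<bullet> i)\<bar> \<le> \<bar>trS m / real DIM('a)\<bar> * norm x"
      unfolding abs_mult using i by (intro mult_left_mono Basis_le_norm) auto
    show "\<bar>Top m x \<bullet> i\<bar> \<le> ((\<Sum>j\<in>Basis. \<bar>Sm m i j\<bar>) + \<bar>trS m / real DIM('a)\<bar>) * norm x"
    proof -
      have "(\<Sum>j\<in>Basis. \<bar>Sm m i j\<bar> * norm x) = (\<Sum>j\<in>Basis. \<bar>Sm m i j\<bar>) * norm x"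
        by (simp add: sum_distrib_right)
      then show ?thesis unfolding Top_comp[OF sm im i] using a b abs_triangle_ineq4[of "\<Sum>j\<in>Basis. Sm m i j * (x \<bullet> j)" "trS m / real DIM('a) * (x \<bullet> i)"]
        by (simp only: distrib_right)
    qed
  qed
  also have "\<dots> = (\<Sum>i\<in>Basis. (\<Sum>j\<in>Basis. \<bar>Sm m i j\<bar>) + \<bar>trS m / real DIM('a)\<bar>) * norm x"
    by (simp add: sum_distrib_right)
  finally show ?thesis .
qed

lemma alg_identity:
  fixes A B C :: "'b \<Rightarrow> 'b \<Rightarrow> real" and d :: real
  assumes fin: "finite I" and d: "d \<noteq> 0" and sym: "\<And>i j. A i j = A j i"
  defines "E \<equiv> \<lambda>i j. B i j + B j i + C i j"
  shows "((\<Sum>i\<in>I. \<Sum>j\<in>I. (A i j + E i j)\<^sup>2) - (\<Sum>i\<in>I. A i i + E i i)\<^sup>2 / d)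
     - ((\<Sum>i\<in>I. \<Sum>j\<in>I. (A i j)\<^sup>2) - (\<Sum>i\<in>I. A i i)\<^sup>2 / d)
     - (4 * (\<Sum>i\<in>I. \<Sum>j\<in>I. A i j * B i j) - 4 * (\<Sum>i\<in>I. A i i) / d * (\<Sum>i\<in>I. B i i))
   = 2 * (\<Sum>i\<in>I. \<Sum>j\<in>I. A i j * C i j) + (\<Sum>i\<in>I. \<Sum>j\<in>I. (E i j)\<^sup>2)
     - (2 * (\<Sum>i\<in>I. A i i) * (\<Sum>i\<in>I. C i i) + (\<Sum>i\<in>I. E i i)\<^sup>2) / d"
proof -
  have h1: "(\<Sum>i\<in>I. \<Sum>j\<in>I. (A i j + E i j)\<^sup>2) = (\<Sum>i\<in>I. \<Sum>j\<in>I. (A i j)\<^sup>2) + 2 * (\<Sum>i\<in>I. \<Sum>j\<in>I. A i j * E i j) + (\<Sum>i\<in>I. \<Sum>j\<in>I. (E i j)\<^sup>2)"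
    by (simp add: power2_sum sum.distrib sum_distrib_left mult.assoc)
  have sw: "(\<Sum>i\<in>I. \<Sum>j\<in>I. A i j * B j i) = (\<Sum>i\<in>I. \<Sum>j\<in>I. A i j * B i j)"
    by (subst sum.swap) (simp add: sym)
  have h2: "(\<Sum>i\<in>I. \<Sum>j\<in>I. A i j * E i j) = 2 * (\<Sum>i\<in>I. \<Sum>j\<in>I. A i j * B i j) + (\<Sum>i\<in>I. \<Sum>j\<in>I. A i j * C i j)"
    unfolding E_def by (simp add: distrib_left sum.distrib sw)
  have h3: "(\<Sum>i\<in>I. A i i + E i i) = (\<Sum>i\<in>I. A i i) + (\<Sum>i\<in>I. E i i)"
    by (simp add: sum.distrib)
  have h4: "(\<Sum>i\<in>I. E i i) = 2 * (\<Sum>i\<in>I. B i i) + (\<Sum>i\<in>I. C i i)"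
    unfolding E_def by (simp add: sum.distrib sum_distrib_left)
  show ?thesis unfolding h1 h2 h3 unfolding h4 using d
    by (simp add: field_simps power2_eq_square)
qed

lemma sum2_bound:
  fixes X :: "'b \<Rightarrow> 'b \<Rightarrow> real"
  assumes "\<And>i j. i \<in> I \<Longrightarrow> j \<in> I \<Longrightarrow> \<bar>X i j\<bar> \<le> K"
  shows "\<bar>\<Sum>i\<in>I. \<Sum>j\<in>I. X i j\<bar> \<le> real (card I) * (real (card I) * K)"
proof -
  have "\<bar>\<Sum>i\<in>I. \<Sum>j\<in>I. X i j\<bar> \<le> (\<Sum>i\<in>I. \<bar>\<Sum>j\<in>I. X i j\<bar>)" by (rule sum_abs)
  also have "\<dots> \<le> (\<Sum>i\<in>I. real (card I) * K)"
  proof (rule sum_mono)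
    fix i assume i: "i \<in> I"
    have "\<bar>\<Sum>j\<in>I. X i j\<bar> \<le> (\<Sum>j\<in>I. \<bar>X i j\<bar>)" by (rule sum_abs)
    also have "\<dots> \<le> (\<Sum>j\<in>I. K)" using assms i by (intro sum_mono) auto
    finally show "\<bar>\<Sum>j\<in>I. X i j\<bar> \<le> real (card I) * K" by simp
  qed
  finally show ?thesis by simp
qed

lemma sum1_bound:
  fixes X :: "'b \<Rightarrow> real"
  assumes "\<And>i. i \<in> I \<Longrightarrow> \<bar>X i\<bar> \<le> K"
  shows "\<bar>\<Sum>i\<in>I. X i\<bar> \<le> real (card I) * K"
proof -
  have "\<bar>\<Sum>i\<in>I. X i\<bar> \<le> (\<Sum>i\<in>I. \<bar>X i\<bar>)" by (rule sum_abs)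
  also have "\<dots> \<le> (\<Sum>i\<in>I. K)" using assms by (intro sum_mono) auto
  finally show ?thesis by simp
qed

lemma rem_bound:
  fixes A B C :: "'b \<Rightarrow> 'b \<Rightarrow> real"
  assumes fin: "finite I" and dpos: "card I > 0"
    and hA: "\<And>i j. i \<in> I \<Longrightarrow> j \<in> I \<Longrightarrow> \<bar>A i j\<bar> \<le> M"
    and hB: "\<And>i j. i \<in> I \<Longrightarrow> j \<in> I \<Longrightarrow> \<bar>B i j\<bar> \<le> b"
    and hC: "\<And>i j. i \<in> I \<Longrightarrow> j \<in> I \<Longrightarrow> \<bar>C i j\<bar> \<le> c"
    and M0: "M \<ge> 0" and b0: "b \<ge> 0" and c0: "c \<ge> 0" and bMc: "b\<^sup>2 \<le> M * c"
  defines "E \<equiv> \<lambda>i j. B i j + B j i + C i j"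
  shows "\<bar>2 * (\<Sum>i\<in>I. \<Sum>j\<in>I. A i j * C i j) + (\<Sum>i\<in>I. \<Sum>j\<in>I. (E i j)\<^sup>2)
     - (2 * (\<Sum>i\<in>I. A i i) * (\<Sum>i\<in>I. C i i) + (\<Sum>i\<in>I. E i i)\<^sup>2) / real (card I)\<bar>
     \<le> 20 * (real (card I))\<^sup>2 * (M + 1) * (c + c\<^sup>2)"
proof -
  define d where "d = real (card I)"
  have d1: "d \<ge> 1" using dpos unfolding d_def by simp
  have hE: "\<bar>E i j\<bar> \<le> 2 * b + c" if "i \<in> I" "j \<in> I" for i j
    unfolding E_def using hB[OF that] hB[OF that(2,1)] hC[OF that] by linarith
  have E2: "(2 * b + c)\<^sup>2 \<le> 8 * M * c + 2 * c\<^sup>2"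
  proof -
    have "0 \<le> (2 * b - c)\<^sup>2" by simp
    then show ?thesis using bMc by (simp add: power2_eq_square algebra_simps)
  qed
  have t1: "\<bar>\<Sum>i\<in>I. \<Sum>j\<in>I. A i j * C i j\<bar> \<le> d * (d * (M * c))"
    unfolding d_def by (rule sum2_bound) (auto simp: abs_mult intro!: mult_mono hA hC M0)
  have t2: "\<bar>\<Sum>i\<in>I. \<Sum>j\<in>I. (E i j)\<^sup>2\<bar> \<le> d * (d * (2 * b + c)\<^sup>2)"
    unfolding d_def
  proof (rule sum2_bound)
    fix i j assume "i \<in> I" "j \<in> I"
    then have "\<bar>E i j\<bar> \<le> 2 * b + c" by (rule hE)
    then have "\<bar>E i j\<bar>\<^sup>2 \<le> (2 * b + c)\<^sup>2" by (intro power_mono) auto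
    then show "\<bar>(E i j)\<^sup>2\<bar> \<le> (2 * b + c)\<^sup>2" by simp
  qed
  have tA: "\<bar>\<Sum>i\<in>I. A i i\<bar> \<le> d * M" unfolding d_def by (rule sum1_bound) (auto intro: hA)
  have tC: "\<bar>\<Sum>i\<in>I. C i i\<bar> \<le> d * c" unfolding d_def by (rule sum1_bound) (auto intro: hC)
  have tE: "\<bar>\<Sum>i\<in>I. E i i\<bar> \<le> d * (2 * b + c)" unfolding d_def by (rule sum1_bound) (auto intro: hE)
  have tE2: "(\<Sum>i\<in>I. E i i)\<^sup>2 \<le> (d * (2 * b + c))\<^sup>2"
    using tE by (metis abs_ge_zero power2_abs power_mono)
  have tAC: "\<bar>2 * (\<Sum>i\<in>I. A i i) * (\<Sum>i\<in>I. C i i)\<bar> \<le> 2 * (d * M) * (d * c)"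
    using tA tC unfolding abs_mult by (intro mult_mono) auto
  define Q where "Q = 2 * (\<Sum>i\<in>I. A i i) * (\<Sum>i\<in>I. C i i) + (\<Sum>i\<in>I. E i i)\<^sup>2"
  have tQ: "\<bar>Q\<bar> \<le> 2 * (d * M) * (d * c) + (d * (2 * b + c))\<^sup>2"
  proof -
    have q1: "\<bar>Q\<bar> \<le> \<bar>2 * (\<Sum>i\<in>I. A i i) * (\<Sum>i\<in>I. C i i)\<bar> + \<bar>(\<Sum>i\<in>I. E i i)\<^sup>2\<bar>"
      unfolding Q_def by (rule abs_triangle_ineq)
    show ?thesis using q1 tAC tE2 by (simp only: abs_power2)
  qed
  have tQd: "\<bar>Q / d\<bar> \<le> 2 * d * M * c + d * (2 * b + c)\<^sup>2"
  proof -
    have "\<bar>Q / d\<bar> = \<bar>Q\<bar> / d" using d1 by simp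
    also have "\<dots> \<le> (2 * (d * M) * (d * c) + (d * (2 * b + c))\<^sup>2) / d"
      using tQ d1 by (intro divide_right_mono) auto
    also have "\<dots> = 2 * d * M * c + d * (2 * b + c)\<^sup>2" using d1 by (simp add: field_simps power2_eq_square)
    finally show ?thesis .
  qed
  have Mc0: "M * c \<ge> 0" using M0 c0 by simp
  have dd: "d \<le> d\<^sup>2" using d1 by (simp add: power2_eq_square)
  have "\<bar>2 * (\<Sum>i\<in>I. \<Sum>j\<in>I. A i j * C i j) + (\<Sum>i\<in>I. \<Sum>j\<in>I. (E i j)\<^sup>2) - Q / d\<bar>
      \<le> 2 * (d * (d * (M * c))) + d * (d * (2 * b + c)\<^sup>2) + (2 * d * M * c + d * (2 * b + c)\<^sup>2)"
    using t1 t2 tQd unfolding abs_le_iff by linarith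
  also have "\<dots> \<le> 2 * d\<^sup>2 * (M * c) + d\<^sup>2 * (8 * M * c + 2 * c\<^sup>2) + (2 * d\<^sup>2 * (M * c) + d\<^sup>2 * (8 * M * c + 2 * c\<^sup>2))"
  proof -
    have a: "d * (d * (2 * b + c)\<^sup>2) \<le> d\<^sup>2 * (8 * M * c + 2 * c\<^sup>2)"
      using E2 d1 by (simp add: power2_eq_square[of d] mult.assoc[symmetric] mult_left_mono)
    have b: "d * (2 * b + c)\<^sup>2 \<le> d\<^sup>2 * (8 * M * c + 2 * c\<^sup>2)"
      using E2 dd d1 by (meson mult_mono order_trans zero_le_power2 order.trans[OF zero_le_power2 E2] zero_le_one)
    have c: "2 * d * M * c \<le> 2 * d\<^sup>2 * (M * c)" using dd Mc0 by (simp add: mult.assoc mult_right_mono)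
    have e: "d * (d * (M * c)) = d\<^sup>2 * (M * c)" by (simp add: power2_eq_square)
    show ?thesis using a b c e by linarith
  qed
  also have "\<dots> \<le> 20 * d\<^sup>2 * (M + 1) * (c + c\<^sup>2)"
  proof -
    have "0 \<le> d\<^sup>2" by simp
    moreover have "4 * (M * c) + 2 * (8 * M * c + 2 * c\<^sup>2) \<le> 20 * (M + 1) * (c + c\<^sup>2)"
      using M0 c0 by (simp add: algebra_simps power2_eq_square)
    ultimately have "d\<^sup>2 * (4 * (M * c) + 2 * (8 * M * c + 2 * c\<^sup>2)) \<le> d\<^sup>2 * (20 * (M + 1) * (c + c\<^sup>2))"
      by (rule mult_left_mono[rotated])
    then show ?thesis by (simp add: algebra_simps)
  qed
  finally show ?thesis unfolding Q_def d_def .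
qed

lemma powr_le_sq:
  fixes t q :: real assumes "t \<ge> 0" "0 < q" "q \<le> 2"
  shows "t powr q \<le> 1 + t\<^sup>2"
proof (cases "t \<le> 1")
  case True
  then have "t powr q \<le> 1" using assms by (intro powr_le1) auto
  then show ?thesis by (smt (verit) zero_le_power2)
next
  case False
  then have "t powr q \<le> t powr 2" using assms by (intro powr_mono) auto
  then show ?thesis using False by (simp add: powr_numeral)
qed

lemma powr_tri:
  fixes a b :: "'a::real_normed_vector" and p :: real
  assumes "p \<ge> 0"
  shows "norm (a - b) powr p \<le> 2 powr p * (norm a powr p + norm b powr p)"
proof -
  define m where "m = max (norm a) (norm b)"
  have "norm (a - b) \<le> 2 * m" using norm_triangle_ineq4[of a b] unfolding m_def by linarith
  then have "norm (a - b) powr p \<le> (2 * m) powr p" using assms by (intro powr_mono2) auto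
  also have "\<dots> = 2 powr p * m powr p" by (simp add: powr_mult)
  also have "m powr p \<le> norm a powr p + norm b powr p"
    unfolding m_def by (cases "norm a \<le> norm b") (auto simp: max_def)
  then have "2 powr p * m powr p \<le> 2 powr p * (norm a powr p + norm b powr p)"
    by (intro mult_left_mono) auto
  finally show ?thesis .
qed

lemma sq_powr_half:
  fixes x p :: real assumes "x \<ge> 0"
  shows "(x\<^sup>2) powr (p / 2) = x powr p"
proof (cases "x = 0")
  case False
  then have "x > 0" using assms by simp
  then have e2: "x\<^sup>2 = x powr 2" by (simp add: powr_numeral)
  have e1: "(x powr 2) powr (p/2) = x powr p" by (simp add: powr_powr)
  show ?thesis using e1 e2 by metis
qed simp

lemma powr_two_over:
  fixes I p :: real assumes "I \<ge> 0" "p > 0"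
  shows "I powr (1 / (p / 2)) = (I powr (1 / p))\<^sup>2"
proof (cases "I = 0")
  case False
  then have "I > 0" using assms by simp
  have "(I powr (1 / p))\<^sup>2 = (I powr (1/p)) powr 2" using \<open>I > 0\<close> by (simp add: powr_numeral)
  also have "\<dots> = I powr (2 / p)" by (simp add: powr_powr)
  finally show ?thesis by simp
qed simp

lemma distr_ident:
  fixes m :: "'a::topological_space measure"
  assumes "sets m = sets borel"
  shows "distr m borel (\<lambda>x. x) = m"
proof (rule measure_eqI)
  show "sets (distr m borel (\<lambda>x. x)) = sets m" using assms by simp
  fix A assume "A \<in> sets (distr m borel (\<lambda>x. x))"
  then have A: "A \<in> sets m" using assms by simp
  have "(\<lambda>x. x) \<in> measurable m borel"
    using measurable_ident_sets[OF assms] .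
  then show "emeasure (distr m borel (\<lambda>x. x)) A = emeasure m A"
    using A assms by (subst emeasure_distr) (auto simp: sets.sets_into_space[OF A] Int_absorb2 dest: sets.sets_into_space)
qed

lemma meas_test:
  fixes \<beta> :: "('a::euclidean_space \<times> 'a \<times> 'a) measure"
  assumes "sets \<beta> = sets borel"
  shows "(\<lambda>w. snd (snd w) - fst w) \<in> borel_measurable \<beta>"
    "(\<lambda>w. fst w) \<in> measurable \<beta> borel"
    "(\<lambda>(x1, x2, x3). (x1, x2)) \<in> measurable \<beta> borel"
  using assms by (auto intro!: meas_borel continuous_intros simp: case_prod_unfold)

lemma meas_powr:
  fixes q :: real
  shows "(\<lambda>(x1::'a::euclidean_space, x2::'a). norm x2 powr q) \<in> borel_measurable borel"
proof -
  have [measurable]: "(\<lambda>z::'a\<times>'a. norm (snd z)) \<in> borel_measurable borel"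
    by (intro borel_measurable_continuous_onI continuous_intros)
  have "(\<lambda>z::'a\<times>'a. norm (snd z) powr q) \<in> borel_measurable borel" by measurable
  then show ?thesis by (simp add: case_prod_unfold)
qed

lemma absint:
  fixes f g :: "'b \<Rightarrow> real"
  assumes "integrable M f" "integrable M g" "\<And>x. \<bar>f x\<bar> \<le> g x"
  shows "\<bar>\<integral>x. f x \<partial>M\<bar> \<le> (\<integral>x. g x \<partial>M)"
proof -
  have "(\<integral>x. f x \<partial>M) \<le> (\<integral>x. g x \<partial>M)" using assms by (intro integral_mono) (auto simp: abs_le_iff)
  moreover have "(\<integral>x. - f x \<partial>M) \<le> (\<integral>x. g x \<partial>M)" using assms by (intro integral_mono) (auto simp: abs_le_iff)
  ultimately show ?thesis by (simp add: abs_le_iff)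
qed

lemma coord_prod_le:
  fixes x y :: "'a::euclidean_space"
  assumes "i \<in> Basis" "j \<in> Basis"
  shows "\<bar>(x \<bullet> i) * (y \<bullet> j)\<bar> \<le> norm x * norm y"
  unfolding abs_mult using assms by (intro mult_mono Basis_le_norm) auto

lemma coord_sq_le:
  fixes x :: "'a::euclidean_space"
  assumes "i \<in> Basis"
  shows "(x \<bullet> i)\<^sup>2 \<le> (norm x)\<^sup>2"
proof -
  have "\<bar>x \<bullet> i\<bar>\<^sup>2 \<le> (norm x)\<^sup>2" using assms by (intro power_mono Basis_le_norm) auto
  then show ?thesis by simp
qed

lemma norm_diff_sq:
  fixes a b :: "'a::real_normed_vector"
  shows "(norm (a - b))\<^sup>2 \<le> 2 * ((norm a)\<^sup>2 + (norm b)\<^sup>2)"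
proof -
  have "norm (a - b) \<le> norm a + norm b" by (rule norm_triangle_ineq4)
  then have "(norm (a - b))\<^sup>2 \<le> (norm a + norm b)\<^sup>2" by (intro power_mono) auto
  also have "\<dots> \<le> 2 * ((norm a)\<^sup>2 + (norm b)\<^sup>2)"
  proof -
    have "0 \<le> (norm a - norm b)\<^sup>2" by simp
    then show ?thesis by (simp add: power2_sum power2_diff)
  qed
  finally show ?thesis .
qed

lemma main_bound:
  fixes p :: real and \<mu> \<nu> :: "'a::euclidean_space measure" and \<beta> :: "('a \<times> 'a \<times> 'a) measure"
  assumes p2: "p \<ge> 2" and \<mu>P: "\<mu> \<in> Pp p" and \<nu>P: "\<nu> \<in> Pp p" and \<beta>P: "\<beta> \<in> Prob"
    and h\<mu>: "distr \<beta> borel fst = \<mu>" and h\<nu>: "distr \<beta> borel (\<lambda>w. snd (snd w)) = \<nu>"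
    and hAE: "AE w in \<beta>. fst (snd w) = 4 *\<^sub>R Top \<mu> (fst w)"
  shows "\<bar>TP \<nu> - TP \<mu> - (\<integral>(x1, x2, x3). x2 \<bullet> (x3 - x1) \<partial>\<beta>)\<bar>
     \<le> 20 * (real DIM('a))\<^sup>2 * (M2sq \<mu> + 1) * ((Cpb p \<beta>)\<^sup>2 + (Cpb p \<beta>)^4)"
proof -
  have p\<beta>: "prob_space \<beta>" and s\<beta>: "sets \<beta> = sets borel" using \<beta>P by (auto simp: Prob_def)
  interpret \<beta>: prob_space \<beta> by fact
  have s\<mu>: "sets \<mu> = sets borel" and s\<nu>: "sets \<nu> = sets borel" using \<mu>P \<nu>P by (auto simp: Pp_def Prob_def)
  have i2\<mu>: "integrable \<mu> (\<lambda>x. (norm x)\<^sup>2)" by (rule mom2[OF p2 \<mu>P])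
  have i2\<nu>: "integrable \<nu> (\<lambda>x. (norm x)\<^sup>2)" by (rule mom2[OF p2 \<nu>P])
  have ip\<mu>: "integrable \<mu> (\<lambda>x. norm x powr p)" using \<mu>P by (simp add: Pp_def)
  have ip\<nu>: "integrable \<nu> (\<lambda>x. norm x powr p)" using \<nu>P by (simp add: Pp_def)
  define X3 where "X3 = (\<lambda>w::'a\<times>'a\<times>'a. snd (snd w))"
  define D where "D = (\<lambda>w. X3 w - fst w)"
  have m1: "fst \<in> measurable \<beta> borel" by (rule meas_borel[OF s\<beta>]) (intro continuous_intros)
  have m3: "X3 \<in> measurable \<beta> borel" unfolding X3_def by (rule meas_borel[OF s\<beta>]) (intro continuous_intros)
  have mD: "D \<in> measurable \<beta> borel" unfolding D_def X3_def by (rule meas_borel[OF s\<beta>]) (intro continuous_intros)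
  have h\<nu>': "distr \<beta> borel X3 = \<nu>" using h\<nu> unfolding X3_def .
  have tr1: "integral\<^sup>L \<mu> h = (\<integral>w. h (fst w) \<partial>\<beta>)" if "h \<in> borel_measurable borel" for h :: "'a \<Rightarrow> real"
    by (subst h\<mu>[symmetric]) (rule integral_distr[OF m1 that])
  have tri1: "integrable \<mu> h = integrable \<beta> (\<lambda>w. h (fst w))" if "h \<in> borel_measurable borel" for h :: "'a \<Rightarrow> real"
    by (subst h\<mu>[symmetric]) (rule integrable_distr_eq[OF m1 that])
  have tr3: "integral\<^sup>L \<nu> h = (\<integral>w. h (X3 w) \<partial>\<beta>)" if "h \<in> borel_measurable borel" for h :: "'a \<Rightarrow> real"
    by (subst h\<nu>'[symmetric]) (rule integral_distr[OF m3 that])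
  have tri3: "integrable \<nu> h = integrable \<beta> (\<lambda>w. h (X3 w))" if "h \<in> borel_measurable borel" for h :: "'a \<Rightarrow> real"
    by (subst h\<nu>'[symmetric]) (rule integrable_distr_eq[OF m3 that])
  have mn2: "(\<lambda>x::'a. (norm x)\<^sup>2) \<in> borel_measurable borel"
    by (intro borel_measurable_continuous_onI continuous_intros)
  have mnp: "(\<lambda>x::'a. norm x powr p) \<in> borel_measurable borel" by measurable
  have i1: "integrable \<beta> (\<lambda>w. (norm (fst w))\<^sup>2)" using i2\<mu> tri1[OF mn2] by simp
  have i3: "integrable \<beta> (\<lambda>w. (norm (X3 w))\<^sup>2)" using i2\<nu> tri3[OF mn2] by simp
  have ip1: "integrable \<beta> (\<lambda>w. norm (fst w) powr p)" using ip\<mu> tri1[OF mnp] by simp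
  have ip3: "integrable \<beta> (\<lambda>w. norm (X3 w) powr p)" using ip\<nu> tri3[OF mnp] by simp
  have iD: "integrable \<beta> (\<lambda>w. (norm (D w))\<^sup>2)"
  proof -
    have "integrable \<beta> (\<lambda>w. 2 * ((norm (X3 w))\<^sup>2 + (norm (fst w))\<^sup>2))" using i1 i3 by simp
    then show ?thesis
      by (rule Bochner_Integration.integrable_bound) (use mD norm_diff_sq in \<open>auto simp: D_def\<close>)
  qed
  have ipD: "integrable \<beta> (\<lambda>w. norm (D w) powr p)"
  proof -
    have "integrable \<beta> (\<lambda>w. 2 powr p * (norm (X3 w) powr p + norm (fst w) powr p))" using ip1 ip3 by simp
    then show ?thesis
      by (rule Bochner_Integration.integrable_bound) (use mD p2 in \<open>auto simp: D_def intro!: AE_I2 powr_tri\<close>)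
  qed
  define r where "r = Cpb p \<beta>"
  define c where "c = (\<integral>w. (norm (D w))\<^sup>2 \<partial>\<beta>)"
  define M where "M = M2sq \<mu>"
  have c0: "c \<ge> 0" unfolding c_def by simp
  have M0: "M \<ge> 0" unfolding M_def M2sq_def by simp
  have Mb: "M = (\<integral>w. (norm (fst w))\<^sup>2 \<partial>\<beta>)" unfolding M_def M2sq_def by (rule tr1[OF mn2])
  have req: "r = (\<integral>w. norm (D w) powr p \<partial>\<beta>) powr (1/p)"
    unfolding r_def Cpb_def D_def X3_def by (simp add: case_prod_unfold norm_minus_commute)
  have cr: "c \<le> r\<^sup>2"
  proof -
    have pw: "((norm (D w))\<^sup>2) powr (p/2) = norm (D w) powr p" for w by (rule sq_powr_half) simp
    have "c \<le> (\<integral>w. ((norm (D w))\<^sup>2) powr (p/2) \<partial>\<beta>) powr (1/(p/2))"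
      unfolding c_def using p2 iD ipD by (intro lyapunov[OF p\<beta>]) (auto simp: pw)
    also have "\<dots> = r\<^sup>2" unfolding req pw using p2 by (intro powr_two_over) auto
    finally show ?thesis .
  qed
  have cr2: "c\<^sup>2 \<le> r ^ 4"
  proof -
    have "c\<^sup>2 \<le> (r\<^sup>2)\<^sup>2" using cr c0 by (intro power_mono) auto
    then show ?thesis by simp
  qed
  have P11: "integrable \<beta> (\<lambda>w. (fst w \<bullet> u) * (fst w \<bullet> v))" for u v by (rule prod_int[OF m1 m1 i1 i1])
  have P1D: "integrable \<beta> (\<lambda>w. (fst w \<bullet> u) * (D w \<bullet> v))" for u v by (rule prod_int[OF m1 mD i1 iD])
  have PDD: "integrable \<beta> (\<lambda>w. (D w \<bullet> u) * (D w \<bullet> v))" for u v by (rule prod_int[OF mD mD iD iD])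
  have mprod: "(\<lambda>x::'a. (x \<bullet> i) * (x \<bullet> j)) \<in> borel_measurable borel" for i j
    by (intro borel_measurable_continuous_onI continuous_intros)
  define A where "A = Sm \<mu>"
  define B where "B = (\<lambda>i j. \<integral>w. (fst w \<bullet> j) * (D w \<bullet> i) \<partial>\<beta>)"
  define C where "C = (\<lambda>i j. \<integral>w. (D w \<bullet> i) * (D w \<bullet> j) \<partial>\<beta>)"
  have Ab: "A i j = (\<integral>w. (fst w \<bullet> i) * (fst w \<bullet> j) \<partial>\<beta>)" for i j
    unfolding A_def Sm_def by (rule tr1[OF mprod])
  have S\<nu>: "Sm \<nu> i j = A i j + (B i j + B j i + C i j)" for i j
  proof -
    have X3e: "X3 w = fst w + D w" for w by (simp add: D_def)
    have "Sm \<nu> i j = (\<integral>w. (X3 w \<bullet> i) * (X3 w \<bullet> j) \<partial>\<beta>)" unfolding Sm_def by (rule tr3[OF mprod])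
    also have "\<dots> = (\<integral>w. (fst w \<bullet> i) * (fst w \<bullet> j) + ((fst w \<bullet> j) * (D w \<bullet> i) + (fst w \<bullet> i) * (D w \<bullet> j) + (D w \<bullet> i) * (D w \<bullet> j)) \<partial>\<beta>)"
      by (intro Bochner_Integration.integral_cong refl) (simp only: X3e inner_add_left algebra_simps)
    also have "\<dots> = A i j + (B i j + B j i + C i j)"
      unfolding Ab B_def C_def using P11 P1D PDD by simp
    finally show ?thesis .
  qed
  define d where "d = real DIM('a)"
  have d0: "d \<noteq> 0" unfolding d_def by simp
  define E where "E = (\<lambda>i j. B i j + B j i + C i j)"
  have TP\<nu>: "TP \<nu> = (\<Sum>i\<in>Basis. \<Sum>j\<in>Basis. (A i j + E i j)\<^sup>2) - (\<Sum>i\<in>Basis. A i i + E i i)\<^sup>2 / d"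
    unfolding TP_formula[OF s\<nu> i2\<nu>] d_def E_def S\<nu> ..
  have TP\<mu>: "TP \<mu> = (\<Sum>i\<in>Basis. \<Sum>j\<in>Basis. (A i j)\<^sup>2) - (\<Sum>i\<in>Basis. A i i)\<^sup>2 / d"
    unfolding TP_formula[OF s\<mu> i2\<mu>] d_def A_def ..
  have L: "(\<integral>(x1, x2, x3). x2 \<bullet> (x3 - x1) \<partial>\<beta>) = 4 * (\<Sum>i\<in>Basis. \<Sum>j\<in>Basis. A i j * B i j) - 4 * (\<Sum>i\<in>Basis. A i i) / d * (\<Sum>i\<in>Basis. B i i)"
  proof -
    have "(\<integral>(x1, x2, x3). x2 \<bullet> (x3 - x1) \<partial>\<beta>) = (\<integral>w. (4 *\<^sub>R Top \<mu> (fst w)) \<bullet> D w \<partial>\<beta>)"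
    proof (rule integral_cong_AE)
      show "(\<lambda>(x1, x2, x3). x2 \<bullet> (x3 - x1)) \<in> borel_measurable \<beta>"
        by (rule meas_borel[OF s\<beta>]) (simp add: case_prod_unfold, intro continuous_intros)
      show "(\<lambda>w. (4 *\<^sub>R Top \<mu> (fst w)) \<bullet> D w) \<in> borel_measurable \<beta>"
        unfolding D_def X3_def
        by (rule meas_borel[OF s\<beta>]) (intro continuous_intros continuous_on_compose2[OF Top_cont[OF s\<mu> i2\<mu>]], auto)
      show "AE w in \<beta>. (case w of (x1, x2, x3) \<Rightarrow> x2 \<bullet> (x3 - x1)) = (4 *\<^sub>R Top \<mu> (fst w)) \<bullet> D w"
        using hAE by eventually_elim (auto simp: D_def X3_def case_prod_unfold)
    qed
    also have "\<dots> = (\<integral>w. (\<Sum>i\<in>Basis. \<Sum>j\<in>Basis. (4 * A i j) * ((fst w \<bullet> j) * (D w \<bullet> i)))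
         - (\<Sum>i\<in>Basis. (4 * (\<Sum>k\<in>Basis. A k k) / d) * ((fst w \<bullet> i) * (D w \<bullet> i))) \<partial>\<beta>)"
    proof (intro Bochner_Integration.integral_cong refl)
      fix w
      have "(4 *\<^sub>R Top \<mu> (fst w)) \<bullet> D w = 4 * (\<Sum>i\<in>Basis. (Top \<mu> (fst w) \<bullet> i) * (D w \<bullet> i))"
        using euclidean_inner[of "Top \<mu> (fst w)" "D w"] by simp
      also have "\<dots> = 4 * (\<Sum>i\<in>Basis. ((\<Sum>j\<in>Basis. A i j * (fst w \<bullet> j)) - (\<Sum>k\<in>Basis. A k k) / d * (fst w \<bullet> i)) * (D w \<bullet> i))"
        by (intro arg_cong[where f="\<lambda>x. 4 * x"] sum.cong refl) (simp add: Top_comp[OF s\<mu> i2\<mu>] A_def trS_def d_def)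
      also have "\<dots> = (\<Sum>i\<in>Basis. \<Sum>j\<in>Basis. (4 * A i j) * ((fst w \<bullet> j) * (D w \<bullet> i)))
         - (\<Sum>i\<in>Basis. (4 * (\<Sum>k\<in>Basis. A k k) / d) * ((fst w \<bullet> i) * (D w \<bullet> i)))"
        by (simp add: sum_distrib_left sum_distrib_right sum_subtractf algebra_simps)
      finally show "(4 *\<^sub>R Top \<mu> (fst w)) \<bullet> D w = \<dots>" .
    qed
    also have "\<dots> = 4 * (\<Sum>i\<in>Basis. \<Sum>j\<in>Basis. A i j * B i j) - 4 * (\<Sum>i\<in>Basis. A i i) / d * (\<Sum>i\<in>Basis. B i i)"
      using P1D unfolding B_def
      by (simp add: integral_sum integrable_sum integral_diff sum_distrib_left sum_distrib_right mult.assoc)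
    finally show ?thesis .
  qed
  have symA: "A i j = A j i" for i j unfolding A_def by (rule Sm_sym)
  have Req: "TP \<nu> - TP \<mu> - (\<integral>(x1, x2, x3). x2 \<bullet> (x3 - x1) \<partial>\<beta>)
     = 2 * (\<Sum>i\<in>Basis. \<Sum>j\<in>Basis. A i j * C i j) + (\<Sum>i\<in>Basis. \<Sum>j\<in>Basis. (E i j)\<^sup>2)
     - (2 * (\<Sum>i\<in>Basis. A i i) * (\<Sum>i\<in>Basis. C i i) + (\<Sum>i\<in>Basis. E i i)\<^sup>2) / d"
    unfolding TP\<nu> TP\<mu> L E_def by (rule alg_identity[OF finite_Basis d0 symA])
  have hA: "\<bar>A i j\<bar> \<le> M" if "i \<in> Basis" "j \<in> Basis" for i j
  proof -
    have "\<bar>A i j\<bar> \<le> (\<integral>x. (norm x)\<^sup>2 \<partial>\<mu>)"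
      unfolding A_def Sm_def using Sm_int[OF s\<mu> i2\<mu>] i2\<mu>
      by (intro absint) (auto simp: power2_eq_square intro: coord_prod_le[OF that])
    then show ?thesis unfolding M_def M2sq_def .
  qed
  have hC: "\<bar>C i j\<bar> \<le> c" if "i \<in> Basis" "j \<in> Basis" for i j
    unfolding C_def c_def using PDD iD
    by (intro absint) (auto simp: power2_eq_square intro: coord_prod_le[OF that])
  have hB: "\<bar>B i j\<bar> \<le> sqrt (M * c)" if "i \<in> Basis" "j \<in> Basis" for i j
  proof -
    have q1: "integrable \<beta> (\<lambda>w. (fst w \<bullet> j)\<^sup>2)" using P11[of j j] by (simp add: power2_eq_square)
    have q2: "integrable \<beta> (\<lambda>w. (D w \<bullet> i)\<^sup>2)" using PDD[of i i] by (simp add: power2_eq_square)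
    have "(B i j)\<^sup>2 \<le> (\<integral>w. (fst w \<bullet> j)\<^sup>2 \<partial>\<beta>) * (\<integral>w. (D w \<bullet> i)\<^sup>2 \<partial>\<beta>)"
      unfolding B_def by (rule CS_int[OF q1 q2 P1D])
    also have "\<dots> \<le> M * c"
    proof (rule mult_mono)
      show "(\<integral>w. (fst w \<bullet> j)\<^sup>2 \<partial>\<beta>) \<le> M"
        unfolding Mb using q1 i1 by (intro integral_mono) (auto intro: coord_sq_le[OF that(2)])
      show "(\<integral>w. (D w \<bullet> i)\<^sup>2 \<partial>\<beta>) \<le> c"
        unfolding c_def using q2 iD by (intro integral_mono) (auto intro: coord_sq_le[OF that(1)])
    qed (auto simp: M0)
    finally have "sqrt ((B i j)\<^sup>2) \<le> sqrt (M * c)" by (rule real_sqrt_le_mono)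
    then show ?thesis by simp
  qed
  have bMc: "(sqrt (M * c))\<^sup>2 \<le> M * c" using M0 c0 by simp
  have b0: "sqrt (M * c) \<ge> 0" using M0 c0 by simp
  have cardpos: "card (Basis::'a set) > 0" by simp
  note RB = rem_bound[where I="Basis::'a set" and A=A and B=B and C=C and M=M and b="sqrt (M * c)" and c=c,
      OF finite_Basis cardpos hA hB hC M0 b0 c0 bMc]
  have fin: "20 * (real DIM('a))\<^sup>2 * (M + 1) * (c + c\<^sup>2) \<le> 20 * (real DIM('a))\<^sup>2 * (M + 1) * (r\<^sup>2 + r ^ 4)"
    using cr cr2 M0 by (intro mult_left_mono) auto
  have "\<bar>TP \<nu> - TP \<mu> - (\<integral>(x1, x2, x3). x2 \<bullet> (x3 - x1) \<partial>\<beta>)\<bar> \<le> 20 * (real DIM('a))\<^sup>2 * (M + 1) * (r\<^sup>2 + r ^ 4)"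
    unfolding Req E_def d_def using order_trans[OF RB fin] by simp
  then show ?thesis unfolding M_def r_def .
qed

theorem mainTheorem7:
  fixes p :: real and \<mu> :: "'a::euclidean_space measure"
  assumes "p \<ge> 2" and "\<mu> \<in> Pp p"
  shows "strongly_differentiable p TP \<mu> (distr \<mu> borel (\<lambda>x. (x, 4 *\<^sub>R Top \<mu> x)))"
proof -
  have p2: "p \<ge> 2" by fact
  have p\<mu>: "prob_space \<mu>" and s\<mu>: "sets \<mu> = sets borel" using assms(2) by (auto simp: Pp_def Prob_def)
  have i2\<mu>: "integrable \<mu> (\<lambda>x. (norm x)\<^sup>2)" by (rule mom2[OF assms])
  interpret PM: prob_space \<mu> by (rule p\<mu>)
  define g where "g = (\<lambda>x::'a. (x, 4 *\<^sub>R Top \<mu> x))"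
  have Tc: "continuous_on UNIV (Top \<mu>)" by (rule Top_cont[OF s\<mu> i2\<mu>])
  have gc: "continuous_on UNIV g" unfolding g_def
    by (intro continuous_on_Pair continuous_on_id continuous_on_scaleR continuous_on_const Tc)
  have gm: "g \<in> measurable \<mu> borel" by (rule meas_borel[OF s\<mu> gc])
  define \<gamma> where "\<gamma> = distr \<mu> borel g"
  have \<gamma>P: "\<gamma> \<in> Prob" unfolding Prob_def \<gamma>_def using prob_space.prob_space_distr[OF p\<mu> gm] by simp
  have fstm: "fst \<in> measurable (borel::('a\<times>'a) measure) borel"
    by (intro borel_measurable_continuous_onI continuous_intros)
  have \<gamma>fst: "distr \<gamma> borel fst = \<mu>"
    unfolding \<gamma>_def by (subst distr_distr[OF fstm gm]) (simp add: comp_def g_def distr_ident[OF s\<mu>])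
  define q where "q = p / (p - 1)"
  have q0: "0 < q" and q2: "q \<le> 2" unfolding q_def using p2 by (auto simp: field_simps)
  define K where "K = (\<Sum>i\<in>Basis. (\<Sum>j\<in>Basis. \<bar>Sm \<mu> i j\<bar>) + \<bar>trS \<mu> / real DIM('a)\<bar>)"
  have \<gamma>int: "integrable \<gamma> (\<lambda>(x1, x2). norm x2 powr (p / (p - 1)))"
  proof -
    have "integrable \<mu> (\<lambda>x. norm (4 *\<^sub>R Top \<mu> x) powr q)"
    proof -
      have "integrable \<mu> (\<lambda>x. 1 + (4 * K)\<^sup>2 * (norm x)\<^sup>2)" using i2\<mu> by simp
      then show ?thesis
      proof (rule Bochner_Integration.integrable_bound)
        show "(\<lambda>x. norm (4 *\<^sub>R Top \<mu> x) powr q) \<in> borel_measurable \<mu>"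
        proof -
          have [measurable]: "(\<lambda>x. norm (4 *\<^sub>R Top \<mu> x)) \<in> borel_measurable \<mu>"
            by (rule meas_borel[OF s\<mu>]) (intro continuous_intros continuous_on_compose2[OF Tc], auto)
          show ?thesis by measurable
        qed
        show "AE x in \<mu>. norm (norm (4 *\<^sub>R Top \<mu> x) powr q) \<le> norm (1 + (4 * K)\<^sup>2 * (norm x)\<^sup>2)"
        proof (rule AE_I2)
          fix x
          have K0: "K \<ge> 0" unfolding K_def by (intro sum_nonneg add_nonneg_nonneg) auto
          have nb: "norm (4 *\<^sub>R Top \<mu> x) \<le> 4 * K * norm x"
            using Top_bound[OF s\<mu> i2\<mu>, of x] unfolding K_def by simp
          have "norm (4 *\<^sub>R Top \<mu> x) powr q \<le> (4 * K * norm x) powr q"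
            using nb q0 by (intro powr_mono2) auto
          also have "\<dots> \<le> 1 + (4 * K * norm x)\<^sup>2" using q0 q2 K0 by (intro powr_le_sq) auto
          finally show "norm (norm (4 *\<^sub>R Top \<mu> x) powr q) \<le> norm (1 + (4 * K)\<^sup>2 * (norm x)\<^sup>2)"
            by (simp add: power_mult_distrib)
        qed
      qed
    qed
    then show ?thesis unfolding \<gamma>_def q_def
      by (subst integrable_distr_eq[OF gm meas_powr]) (simp add: g_def)
  qed
  define Kw where "Kw = 20 * (real DIM('a))\<^sup>2 * (M2sq \<mu> + 1)"
  define \<omega> where "\<omega> = (\<lambda>r::real. Kw * (r\<^sup>2 + r ^ 4))"
  have lim: "((\<lambda>r. \<omega> r / r) \<longlongrightarrow> 0) (at_right 0)"
  proof -
    have "((\<lambda>r::real. Kw * (r + r ^ 3)) \<longlongrightarrow> Kw * (0 + 0 ^ 3)) (at_right 0)"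
      by (intro tendsto_intros)
    then have t: "((\<lambda>r::real. Kw * (r + r ^ 3)) \<longlongrightarrow> 0) (at_right 0)" by simp
    have "\<forall>\<^sub>F r in at_right (0::real). Kw * (r + r ^ 3) = \<omega> r / r"
      using eventually_at_right_less[of "0::real"]
      by eventually_elim (simp add: \<omega>_def field_simps power2_eq_square power3_eq_cube power4_eq_xxxx)
    then show ?thesis using t by (rule Lim_transform_eventually[rotated])
  qed
  have bound: "\<bar>TP \<nu> - TP \<mu> - (\<integral>(x1, x2, x3). x2 \<bullet> (x3 - x1) \<partial>\<beta>)\<bar> \<le> \<omega> (Cpb p \<beta>)"
    if \<nu>P: "\<nu> \<in> Pp p" and \<beta>G: "\<beta> \<in> Gam \<gamma> \<nu>" for \<nu> \<beta>
  proof -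
    have \<beta>P: "\<beta> \<in> Prob" and h12: "distr \<beta> borel (\<lambda>(x1, x2, x3). (x1, x2)) = \<gamma>"
      and h3: "distr \<beta> borel (\<lambda>(x1, x2, x3). x3) = \<nu>" using \<beta>G by (auto simp: Gam_def)
    have s\<beta>: "sets \<beta> = sets borel" using \<beta>P by (simp add: Prob_def)
    have m12: "(\<lambda>(x1::'a, x2::'a, x3::'a). (x1, x2)) \<in> measurable \<beta> borel"
      by (rule meas_borel[OF s\<beta>]) (simp add: case_prod_unfold, intro continuous_intros)
    have h\<mu>: "distr \<beta> borel fst = \<mu>"
    proof -
      have "distr \<beta> borel fst = distr \<beta> borel (fst \<circ> (\<lambda>(x1::'a, x2::'a, x3::'a). (x1, x2)))"
        by (simp add: comp_def case_prod_unfold)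
      also have "\<dots> = distr (distr \<beta> borel (\<lambda>(x1, x2, x3). (x1, x2))) borel fst"
        by (rule distr_distr[OF fstm m12, symmetric])
      finally show ?thesis using h12 \<gamma>fst by simp
    qed
    have h\<nu>: "distr \<beta> borel (\<lambda>w. snd (snd w)) = \<nu>" using h3 by (simp add: case_prod_unfold)
    have clo: "{z \<in> space (borel::('a\<times>'a) measure). snd z = 4 *\<^sub>R Top \<mu> (fst z)} \<in> sets borel"
    proof -
      have "closed {z::'a\<times>'a. snd z = 4 *\<^sub>R Top \<mu> (fst z)}"
        by (intro closed_Collect_eq continuous_intros continuous_on_compose2[OF Tc]) auto
      then show ?thesis by simp
    qed
    have "AE z in \<gamma>. snd z = 4 *\<^sub>R Top \<mu> (fst z)"
      unfolding \<gamma>_def by (subst AE_distr_iff[OF gm clo]) (simp add: g_def)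
    then have "AE w in \<beta>. (\<lambda>z. snd z = 4 *\<^sub>R Top \<mu> (fst z)) ((\<lambda>(x1, x2, x3). (x1, x2)) w)"
      unfolding h12[symmetric] by (subst (asm) AE_distr_iff[OF m12 clo])
    then have hAE: "AE w in \<beta>. fst (snd w) = 4 *\<^sub>R Top \<mu> (fst w)"
      by (simp add: case_prod_unfold)
    show ?thesis using main_bound[OF p2 assms(2) \<nu>P \<beta>P h\<mu> h\<nu> hAE] unfolding \<omega>_def Kw_def
      by (simp add: mult.assoc)
  qed
  show ?thesis unfolding strongly_differentiable_def
    using \<gamma>P \<gamma>fst \<gamma>int lim bound unfolding \<gamma>_def g_def by blast
qed

end
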